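(* Let $\{e_1,e_2,e_3\}$ be the standard basis of $\mathbb{R}^3$, let $\eta\in(0,\pi)$, $l>0$, and set $x_1=0$, $x_2=e_1$, $x_4=l(\cos\eta\,e_1+\sin\eta\,e_2)$, $x_3=x_2+x_4-x_1$. For $\lambda_1,\lambda_2\in(0,1)$ let $x_0=x_1+\lambda_1(x_2-x_1)+\lambda_2(x_4-x_1)$. Then the (Kawasaki) condition $\angle x_1x_0x_4+\angle x_2x_0x_3=\pi$ holds if and only if $$(\lambda_2-1)\lambda_2\, l^2-(\lambda_1-1)\lambda_1=0 .$$
   Context: $\angle abc\in[0,\pi]$ denotes the (unsigned) angle at the vertex $b$ between the segments $ba$ and $bc$, i.e. $\arccos\big(\frac{(a-b)\cdot(c-b)}{|a-b||c-b|}\big)$. The point $x_0$ lies in the interior of the parallelogram with corners $x_1,x_2,x_3,x_4$. *)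

theory Defs
  imports "HOL-Analysis.Analysis"
begin

definition vertex_angle :: "real^3 \<Rightarrow> real^3 \<Rightarrow> real^3 \<Rightarrow> real" where
  "vertex_angle a b c = arccos (((a - b) \<bullet> (c - b)) / (norm (a - b) * norm (c - b)))"

end

theory Submission
  imports Defs
begin

lemma va:
  fixes a b c :: "real^3"
  assumes "a$3 = 0" "b$3 = 0" "c$3 = 0"
  shows "vertex_angle a b c = arccos (((a$1-b$1)*(c$1-b$1) + (a$2-b$2)*(c$2-b$2)) /
     (sqrt ((a$1-b$1)^2 + (a$2-b$2)^2) * sqrt ((c$1-b$1)^2 + (c$2-b$2)^2)))"
  using assms unfolding vertex_angle_def norm_eq_sqrt_inner inner_vec_def sum_3
  by (simp add: power2_eq_square)

lemma ang_cs:
  fixes p1 p2 q1 q2 :: real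
  assumes "p1*q2 - p2*q1 \<noteq> 0"
  defines "N \<equiv> sqrt (p1^2+p2^2) * sqrt (q1^2+q2^2)"
  defines "x \<equiv> (p1*q1+p2*q2)/N"
  shows "-1 < x" "x < 1" "cos (arccos x) = x" "sin (arccos x) = \<bar>p1*q2 - p2*q1\<bar>/N" "N > 0"
proof -
  have pp: "p1^2+p2^2 > 0" using assms(1) by (metis add_pos_nonneg mult_eq_0_iff not_less_iff_gr_or_eq power2_less_0 sum_power2_gt_zero_iff diff_self)
  have qq: "q1^2+q2^2 > 0" using assms(1) by (metis add_pos_nonneg mult_eq_0_iff not_less_iff_gr_or_eq power2_less_0 sum_power2_gt_zero_iff diff_self mult_zero_right)
  show Np: "N > 0" unfolding N_def using pp qq by simp
  have N2: "N^2 = (p1*q1+p2*q2)^2 + (p1*q2 - p2*q1)^2"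
    unfolding N_def using pp qq by (simp add: power_mult_distrib algebra_simps power2_eq_square)
  have x2: "1 - x^2 = (p1*q2 - p2*q1)^2 / N^2"
  proof -
    have "1 - x^2 = (N^2 - (p1*q1+p2*q2)^2) / N^2" using Np by (simp add: x_def power_divide field_simps)
    then show ?thesis using N2 by simp
  qed
  have "(p1*q2 - p2*q1)^2 / N^2 > 0" using assms(1) Np by simp
  then have lt: "x^2 < 1" using x2 by linarith
  then have "\<bar>x\<bar> < 1" by (simp add: abs_square_less_1)
  then show "-1 < x" "x < 1" by auto
  then show "cos (arccos x) = x" by simp
  have "sin (arccos x) = sqrt (1 - x^2)" using \<open>-1<x\<close> \<open>x<1\<close> by (simp add: sin_arccos)
  also have "\<dots> = \<bar>p1*q2 - p2*q1\<bar>/N" using x2 Np by (simp add: real_sqrt_divide)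
  finally show "sin (arccos x) = \<bar>p1*q2 - p2*q1\<bar>/N" .
qed

lemma sum_pi:
  fixes x y :: real
  assumes "-1 < x" "x < 1" "-1 < y" "y < 1"
  shows "arccos x + arccos y = pi \<longleftrightarrow> sin (arccos x) * y + x * sin (arccos y) = 0"
proof -
  have b: "0 < arccos x" "arccos x < pi" "0 < arccos y" "arccos y < pi"
    using arccos_lt_bounded assms by auto
  have "sin (arccos x) * y + x * sin (arccos y) = sin (arccos x + arccos y)"
    using assms by (simp add: sin_add)
  also have "\<dots> = - sin (arccos x + arccos y - pi)" by (simp add: sin_diff)
  finally have e: "sin (arccos x) * y + x * sin (arccos y) = - sin (arccos x + arccos y - pi)" .
  have "\<bar>arccos x + arccos y - pi\<bar> < pi" using b by linarith
  from sin_zero_pi_iff[OF this] show ?thesis unfolding e by linarith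
qed
lemma main2:
  fixes p1 p2 q1 q2 r1 r2 t1 t2 :: real
  assumes "p1*q2 - p2*q1 \<noteq> 0" "r1*t2 - r2*t1 \<noteq> 0"
  shows "arccos ((p1*q1+p2*q2)/(sqrt (p1^2+p2^2) * sqrt (q1^2+q2^2))) +
         arccos ((r1*t1+r2*t2)/(sqrt (r1^2+r2^2) * sqrt (t1^2+t2^2))) = pi \<longleftrightarrow>
         \<bar>p1*q2 - p2*q1\<bar> * (r1*t1+r2*t2) + (p1*q1+p2*q2) * \<bar>r1*t2 - r2*t1\<bar> = 0"
proof -
  note A = ang_cs[OF assms(1)] and B = ang_cs[OF assms(2)]
  define N1 where "N1 = sqrt (p1^2+p2^2) * sqrt (q1^2+q2^2)"
  define N2 where "N2 = sqrt (r1^2+r2^2) * sqrt (t1^2+t2^2)"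
  have n: "N1 > 0" "N2 > 0" using A(5) B(5) N1_def N2_def by auto
  note e0 = sum_pi[OF A(1,2) B(1,2), unfolded A(4) B(4), folded N1_def N2_def]
  have e1: "(\<bar>p1*q2 - p2*q1\<bar>/N1 * ((r1*t1+r2*t2)/N2) + (p1*q1+p2*q2)/N1 * (\<bar>r1*t2 - r2*t1\<bar>/N2) = 0) \<longleftrightarrow>
     (\<bar>p1*q2 - p2*q1\<bar> * (r1*t1+r2*t2) + (p1*q1+p2*q2) * \<bar>r1*t2 - r2*t1\<bar> = 0)"
  proof -
    have "\<bar>p1*q2 - p2*q1\<bar>/N1 * ((r1*t1+r2*t2)/N2) + (p1*q1+p2*q2)/N1 * (\<bar>r1*t2 - r2*t1\<bar>/N2)
       = (\<bar>p1*q2 - p2*q1\<bar> * (r1*t1+r2*t2) + (p1*q1+p2*q2) * \<bar>r1*t2 - r2*t1\<bar>) / (N1*N2)"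
      using n by (simp add: field_simps)
    then show ?thesis using n by simp
  qed
  show ?thesis using e0 e1 unfolding N1_def N2_def by simp
qed

lemma polyid: fixes lam1 lam2 C S :: real shows "lam1 * S * ((1 - (lam1 + lam2 * C)) * (1 + C - (lam1 + lam2 * C)) + (0 - lam2 * S) * (S - lam2 * S)) +
       ((0 - (lam1 + lam2 * C)) * (C - (lam1 + lam2 * C)) + (0 - lam2 * S) * (S - lam2 * S)) * ((1 - lam1) * S)
       = S * (lam1 * (1 - lam1) + lam2 * (lam2 - 1) * (C^2 + S^2))"
  by (simp add: algebra_simps power2_eq_square)

theorem mainTheorem1:
  fixes eta l lam1 lam2 :: real and x0 x1 x2 x3 x4 :: "real^3"
  assumes "0 < eta" "eta < pi" "l > 0"
    and "0 < lam1" "lam1 < 1" "0 < lam2" "lam2 < 1"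
    and "x1 = 0" "x2 = axis 1 1"
    and "x4 = l *\<^sub>R (cos eta *\<^sub>R axis 1 1 + sin eta *\<^sub>R axis 2 1)"
    and "x3 = x2 + x4 - x1"
    and "x0 = x1 + lam1 *\<^sub>R (x2 - x1) + lam2 *\<^sub>R (x4 - x1)"
  shows "vertex_angle x1 x0 x4 + vertex_angle x2 x0 x3 = pi \<longleftrightarrow>
         (lam2 - 1) * lam2 * l\<^sup>2 - (lam1 - 1) * lam1 = 0"
proof -
  define C where "C = l * cos eta"
  define S where "S = l * sin eta"
  have Sp: "S > 0" unfolding S_def using assms(1-3) sin_gt_zero by (simp add: mult_pos_pos)
  have CS: "C^2 + S^2 = l^2"
    unfolding C_def S_def by (simp add: power_mult_distrib flip: distrib_left)
  have ax: "axis 1 1 $ (1::3) = (1::real)" "axis 1 1 $ (2::3) = (0::real)" "axis 1 1 $ (3::3) = (0::real)"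
     "axis 2 1 $ (1::3) = (0::real)" "axis 2 1 $ (2::3) = (1::real)" "axis 2 1 $ (3::3) = (0::real)"
    by (simp_all add: axis_def)
  have c1: "x1$1 = 0" "x1$2 = 0" "x1$3 = 0" using assms(8) by simp_all
  have c2: "x2$1 = 1" "x2$2 = 0" "x2$3 = 0" using assms(9) ax by simp_all
  have c4: "x4$1 = C" "x4$2 = S" "x4$3 = 0" using assms(10) ax unfolding C_def S_def by simp_all
  have c3: "x3$1 = 1 + C" "x3$2 = S" "x3$3 = 0" using assms(11) c1 c2 c4 by simp_all
  have c0: "x0$1 = lam1 + lam2 * C" "x0$2 = lam2 * S" "x0$3 = 0" using assms(12) c1 c2 c4 by simp_all
  have d1: "(x1$1 - x0$1) * (x4$2 - x0$2) - (x1$2 - x0$2) * (x4$1 - x0$1) = - lam1 * S"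
    unfolding c0 c1 c4 by (simp add: algebra_simps)
  have d2: "(x2$1 - x0$1) * (x3$2 - x0$2) - (x2$2 - x0$2) * (x3$1 - x0$1) = (1 - lam1) * S"
    unfolding c0 c2 c3 by (simp add: algebra_simps)
  have "vertex_angle x1 x0 x4 + vertex_angle x2 x0 x3 = pi \<longleftrightarrow>
     \<bar>- lam1 * S\<bar> * ((x2$1 - x0$1) * (x3$1 - x0$1) + (x2$2 - x0$2) * (x3$2 - x0$2)) +
     ((x1$1 - x0$1) * (x4$1 - x0$1) + (x1$2 - x0$2) * (x4$2 - x0$2)) * \<bar>(1 - lam1) * S\<bar> = 0"
    using main2[of "x1$1 - x0$1" "x4$2 - x0$2" "x1$2 - x0$2" "x4$1 - x0$1"
                   "x2$1 - x0$1" "x3$2 - x0$2" "x2$2 - x0$2" "x3$1 - x0$1"]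
    unfolding d1 d2 va[OF c1(3) c0(3) c4(3)] va[OF c2(3) c0(3) c3(3)]
    using Sp assms(4,5) by simp
  also have "\<dots> \<longleftrightarrow> S * (lam1 * (1 - lam1) + lam2 * (lam2 - 1) * (C^2 + S^2)) = 0"
  proof -
    have a1: "\<bar>- lam1 * S\<bar> = lam1 * S" "\<bar>(1 - lam1) * S\<bar> = (1 - lam1) * S"
      using Sp assms(4,5) by (simp_all add: abs_mult)
    have E: "lam1 * S * ((1 - (lam1 + lam2 * C)) * (1 + C - (lam1 + lam2 * C)) + (0 - lam2 * S) * (S - lam2 * S)) +
       ((0 - (lam1 + lam2 * C)) * (C - (lam1 + lam2 * C)) + (0 - lam2 * S) * (S - lam2 * S)) * ((1 - lam1) * S)
       = S * (lam1 * (1 - lam1) + lam2 * (lam2 - 1) * (C^2 + S^2))"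
      by (rule polyid)
    show ?thesis unfolding a1 c0 c1 c2 c3 c4 E by (rule refl)
  qed
  finally have F: "vertex_angle x1 x0 x4 + vertex_angle x2 x0 x3 = pi \<longleftrightarrow>
      S * (lam1 * (1 - lam1) + lam2 * (lam2 - 1) * (C^2 + S^2)) = 0" .
  have G: "S * (lam1 * (1 - lam1) + lam2 * (lam2 - 1) * (C^2 + S^2)) = 0 \<longleftrightarrow>
      (lam2 - 1) * lam2 * l\<^sup>2 - (lam1 - 1) * lam1 = 0"
  proof -
    have "lam1 * (1 - lam1) + lam2 * (lam2 - 1) * l\<^sup>2 = (lam2 - 1) * lam2 * l\<^sup>2 - (lam1 - 1) * lam1"
      by (simp add: algebra_simps)
    moreover have "S * (lam1 * (1 - lam1) + lam2 * (lam2 - 1) * l\<^sup>2) = 0 \<longleftrightarrow>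
        lam1 * (1 - lam1) + lam2 * (lam2 - 1) * l\<^sup>2 = 0" using Sp by simp
    ultimately show ?thesis unfolding CS by (simp only: mult.commute)
  qed
  show ?thesis using F G by blast
qed
end
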